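(* Let $\alpha\in(0,1)$, $\mathrm{g}\ge0$, $\epsilon>0$, and let $u^0,u^1,\dots,u^N\in\mathcal{V}_h$ be the solution of the variable-step L1 scheme described in the context. If the maximum time step satisfies $$\tau \le \left(\frac{3}{\Gamma(2-\alpha)(4\mathrm{g}^2+3\epsilon)}\right)^{1/\alpha},$$ then the modified discrete energy is nonincreasing: $\mathcal{E}[u^n]-\mathcal{E}[u^{n-1}]\le 0$ (equivalently $(\mathcal{E}[u^n]-\mathcal{E}[u^{n-1}])/\tau_n\le 0$) for all $1\le n\le N$.
   Context: Time grid: $0=t_0<t_1<\dots<t_N=T$, $\tau_k=t_k-t_{k-1}$, $\tau=\max_k\tau_k$, $\triangledown_\tau v^k=v^k-v^{k-1}$. Let $\omega_{\beta}(t)=t^{\beta-1}/\Gamma(\beta)$. The L1 kernels are $a^{(n)}_{n-k}=\frac{1}{\tau_k}\int_{t_{k-1}}^{t_k}\omega_{1-\alpha}(t_n-s)\,ds$ for $1\le k\le n$, and $D^\alpha_\tau v^n=\sum_{k=1}^n a^{(n)}_{n-k}\triangledown_\tau v^k$. The discrete complementary convolution kernels are defined by $p^{(n)}_0=1/a^{(n)}_0$ and $p^{(n)}_{n-k}=\frac{1}{a^{(k)}_0}\sum_{j=k+1}^n\big(a^{(j)}_{j-k-1}-a^{(j)}_{j-k}\big)p^{(n)}_{n-j}$ for $1\le k\le n-1$. Space: $\Omega=(0,L)^2$, $h=L/M$, $x_i=ih$, $y_j=jh$; $\mathcal{V}_h$ is the set of grid functions on $\{(x_i,y_j):0\le i,j\le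 M\}$ that are $L$-periodic in each direction; $\Delta_h=\delta_x^2+\delta_y^2$ with $\delta_x^2v_{ij}=(v_{i+1,j}-2v_{ij}+v_{i-1,j})/h^2$ and similarly $\delta_y^2$. Discrete inner product $\langle v,w\rangle=h^2\sum_{1\le i,j\le M-1}v_{ij}w_{ij}$, $\|v\|=\sqrt{\langle v,v\rangle}$, $\|v\|_4^4=h^2\sum_{1\le i,j\le M-1}v_{ij}^4$. Let $f(u)=u^3-\mathrm{g}u^2-\epsilon u$. The scheme: $u^0_h=u_0(x_h)$ and for $1\le n\le N$, $D^\alpha_\tau u^n_h=-\mu^n_h$ with $\mu^n_h=(1+\Delta_h)^2u^n_h+f(u^n_h)$ at the grid points, periodic boundary conditions. Discrete energy: $E[u^n]=\frac12\|(1+\Delta_h)u^n\|^2+\frac14\|u^n\|_4^4-\frac{\mathrm g}{3}\langle (u^n)^2,u^n\rangle-\frac{\epsilon}{2}\|u^n\|^2$. Modified energy: $\mathcal{E}[u^0]=E[u^0]$ and $\mathcal{E}[u^n]=E[u^n]+\frac12\sum_{j=1}^n p^{(n)}_{n-j}\|\mu^j\|^2$ for $n\ge1$. *)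

theory Defs
  imports "HOL-Analysis.Analysis"
begin

definition omega :: "real \<Rightarrow> real \<Rightarrow> real" where
  "omega \<beta> x = x powr (\<beta> - 1) / Gamma \<beta>"

definition tstep :: "(nat \<Rightarrow> real) \<Rightarrow> nat \<Rightarrow> real" where
  "tstep t k = t k - t (k - 1)"

definition tmax :: "(nat \<Rightarrow> real) \<Rightarrow> nat \<Rightarrow> real" where
  "tmax t N = Max (tstep t ` {1..N})"

(* L1 kernel:  L1a alpha t n k  =  a^{(n)}_{n-k}  (1 <= k <= n) *)
definition L1a :: "real \<Rightarrow> (nat \<Rightarrow> real) \<Rightarrow> nat \<Rightarrow> nat \<Rightarrow> real" where
  "L1a \<alpha> t n k = (1 / tstep t k) * integral {t (k - 1)..t k} (\<lambda>s. omega (1 - \<alpha>) (t n - s))"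

(* discrete complementary convolution kernels:  Pk alpha t n k = p^{(n)}_{n-k}  (1 <= k <= n) *)
function Pk :: "real \<Rightarrow> (nat \<Rightarrow> real) \<Rightarrow> nat \<Rightarrow> nat \<Rightarrow> real" where
  "Pk \<alpha> t n k =
     (if n \<le> k then 1 / L1a \<alpha> t n n
      else (1 / L1a \<alpha> t k k) *
           (\<Sum>j\<in>{k+1..n}. (L1a \<alpha> t j (k + 1) - L1a \<alpha> t j k) * Pk \<alpha> t n j))"
  by pat_completeness auto
termination
  by (relation "Wellfounded.measure (\<lambda>(\<alpha>, t, n, k). n - k)") auto

definition Dtau :: "real \<Rightarrow> (nat \<Rightarrow> real) \<Rightarrow> (nat \<Rightarrow> real) \<Rightarrow> nat \<Rightarrow> real" where
  "Dtau \<alpha> t v n = (\<Sum>k=1..n. L1a \<alpha> t n k * (v k - v (k - 1)))"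

(* grid functions indexed by integers, L-periodic i.e. M-periodic in the indices *)
type_synonym grid = "int \<Rightarrow> int \<Rightarrow> real"

definition grid_periodic :: "nat \<Rightarrow> grid \<Rightarrow> bool" where
  "grid_periodic M v \<longleftrightarrow> (\<forall>i j. v (i + int M) j = v i j \<and> v i (j + int M) = v i j)"

definition lap_h :: "real \<Rightarrow> grid \<Rightarrow> grid" where
  "lap_h h v = (\<lambda>i j. (v (i + 1) j - 2 * v i j + v (i - 1) j) / h\<^sup>2
                    + (v i (j + 1) - 2 * v i j + v i (j - 1)) / h\<^sup>2)"

definition opL :: "real \<Rightarrow> grid \<Rightarrow> grid" where
  "opL h v = (\<lambda>i j. v i j + lap_h h v i j)"

definition inner_h :: "nat \<Rightarrow> real \<Rightarrow> grid \<Rightarrow> grid \<Rightarrow> real" where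
  "inner_h M h v w = h\<^sup>2 * (\<Sum>i\<in>{1..int M}. \<Sum>j\<in>{1..int M}. v i j * w i j)"

definition norm_h :: "nat \<Rightarrow> real \<Rightarrow> grid \<Rightarrow> real" where
  "norm_h M h v = sqrt (inner_h M h v v)"

definition norm4_pow4 :: "nat \<Rightarrow> real \<Rightarrow> grid \<Rightarrow> real" where
  "norm4_pow4 M h v = h\<^sup>2 * (\<Sum>i\<in>{1..int M}. \<Sum>j\<in>{1..int M}. (v i j) ^ 4)"

definition fnl :: "real \<Rightarrow> real \<Rightarrow> real \<Rightarrow> real" where
  "fnl g \<epsilon> x = x ^ 3 - g * x\<^sup>2 - \<epsilon> * x"

definition mu_h :: "real \<Rightarrow> real \<Rightarrow> real \<Rightarrow> grid \<Rightarrow> grid" where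
  "mu_h g \<epsilon> h v = (\<lambda>i j. opL h (opL h v) i j + fnl g \<epsilon> (v i j))"

definition energy :: "nat \<Rightarrow> real \<Rightarrow> real \<Rightarrow> real \<Rightarrow> grid \<Rightarrow> real" where
  "energy M h g \<epsilon> v =
     1/2 * (norm_h M h (opL h v))\<^sup>2 + 1/4 * norm4_pow4 M h v
     - g / 3 * inner_h M h (\<lambda>i j. (v i j)\<^sup>2) v - \<epsilon> / 2 * (norm_h M h v)\<^sup>2"

definition mod_energy :: "real \<Rightarrow> (nat \<Rightarrow> real) \<Rightarrow> nat \<Rightarrow> real \<Rightarrow> real \<Rightarrow> real \<Rightarrow> (nat \<Rightarrow> grid) \<Rightarrow> nat \<Rightarrow> real" where
  "mod_energy \<alpha> t M h g \<epsilon> u n =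
     (if n = 0 then energy M h g \<epsilon> (u 0)
      else energy M h g \<epsilon> (u n)
           + 1/2 * (\<Sum>j=1..n. Pk \<alpha> t n j * (norm_h M h (mu_h g \<epsilon> h (u j)))\<^sup>2))"

end

theory Submission
  imports Defs
begin

definition pw :: "real \<Rightarrow> real \<Rightarrow> real" where "pw b z = (max 0 z) powr b"

lemma pw_cont: assumes "b > 0" shows "continuous_on UNIV (pw b)"
  unfolding pw_def using assms
  by (intro continuous_on_powr') (auto intro!: continuous_intros)

lemma pw_isCont: assumes "b > 0" shows "isCont (pw b) z"
  using pw_cont[OF assms] by (simp add: continuous_on_eq_continuous_at)

lemma pw_deriv: assumes "z > 0" shows "DERIV (pw b) z :> b * z powr (b - 1)"
proof -
  have e0: "eventually (\<lambda>y. y \<in> {0<..}) (nhds z)"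
    by (rule eventually_nhds_in_open) (use assms in auto)
  have ev: "\<forall>\<^sub>F y in nhds z. pw b y = y powr b"
    by (rule eventually_mono[OF e0]) (auto simp: pw_def)
  show ?thesis
    by (subst DERIV_cong_ev[OF refl ev refl]) (rule has_real_derivative_powr[OF assms])
qed

lemma pw_pos: "z > 0 \<Longrightarrow> pw b z = z powr b" by (simp add: pw_def)
lemma pw_zero: "z \<le> 0 \<Longrightarrow> pw b z = 0" by (simp add: pw_def)

lemma pw_strict_mono: assumes "b > 0" "x < y" "0 \<le> x" shows "pw b x < pw b y"
  using assms by (auto simp: pw_def intro: powr_less_mono2)

lemma Gamma2: fixes a :: real assumes "0 < a" "a < 1" shows "Gamma (2 - a) = (1 - a) * Gamma (1 - a)"
proof -
  have "1 - a \<notin> \<int>\<^sub>\<le>\<^sub>0"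
  proof
    assume "1 - a \<in> \<int>\<^sub>\<le>\<^sub>0"
    then have "1 - a \<le> 0" by (rule nonpos_Ints_nonpos)
    with assms show False by simp
  qed
  from Gamma_plus1[OF this] show ?thesis by (simp add: algebra_simps)
qed

locale kern =
  fixes \<alpha> :: real and t :: "nat \<Rightarrow> real" and N :: nat
  assumes a0: "0 < \<alpha>" and a1: "\<alpha> < 1"
    and tm: "\<And>k. k \<in> {1..N} \<Longrightarrow> t (k - 1) < t k"
begin

lemma t_less: "i < j \<Longrightarrow> j \<le> N \<Longrightarrow> t i < t j"
proof (induction j)
  case 0 then show ?case by simp
next
  case (Suc j)
  have "t j < t (Suc j)" using tm[of "Suc j"] Suc.prems by simp
  then show ?case using Suc by (cases "i = j") auto
qed

lemma t_le: "i \<le> j \<Longrightarrow> j \<le> N \<Longrightarrow> t i \<le> t j"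
  using t_less by (cases "i = j") (auto intro: less_imp_le)

lemma L1a_closed:
  assumes k: "1 \<le> k" "k \<le> n" "n \<le> N"
  shows "L1a \<alpha> t n k = (pw (1 - \<alpha>) (t n - t (k - 1)) - pw (1 - \<alpha>) (t n - t k))
                         / (Gamma (2 - \<alpha>) * tstep t k)"
proof -
  define G where "G = Gamma (2 - \<alpha>)"
  have G: "G = (1 - \<alpha>) * Gamma (1 - \<alpha>)" using Gamma2 a0 a1 G_def by simp
  have Gp: "Gamma (1 - \<alpha>) > 0" using a1 by simp
  have Gnz: "G \<noteq> 0" unfolding G_def using a1 Gamma_real_pos[of "2-\<alpha>"] by linarith
  have lt: "t (k - 1) < t k" using tm k by simp
  have le: "t k \<le> t n" using t_le k by simp
  define F where "F = (\<lambda>s. - pw (1 - \<alpha>) (t n - s) / G)"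
  have "((\<lambda>s. omega (1 - \<alpha>) (t n - s)) has_integral (F (t k) - F (t (k - 1)))) {t (k - 1)..t k}"
  proof (rule fundamental_theorem_of_calculus_interior)
    show "t (k - 1) \<le> t k" using lt by simp
    show "continuous_on {t (k - 1)..t k} F" unfolding F_def
      using a1 Gnz by (intro continuous_intros continuous_on_compose2[OF pw_cont[of "1-\<alpha>"]]) auto
    fix s assume s: "s \<in> {t (k - 1)<..<t k}"
    then have sp: "t n - s > 0" using le by auto
    have d: "DERIV (\<lambda>s. pw (1 - \<alpha>) (t n - s)) s :> (1 - \<alpha>) * (t n - s) powr (1 - \<alpha> - 1) * (0 - 1)"
    proof -
      have d0: "DERIV (pw (1 - \<alpha>)) (t n - s) :> (1 - \<alpha>) * (t n - s) powr (1 - \<alpha> - 1)"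
        by (rule pw_deriv[OF sp])
      have d1: "DERIV (\<lambda>s. t n - s) s :> (0 - 1)" by (intro derivative_eq_intros) auto
      show ?thesis using DERIV_chain2[OF d0 d1] by simp
    qed
    have e: "- ((1 - \<alpha>) * (t n - s) powr (1 - \<alpha> - 1) * (0 - 1)) / G = omega (1 - \<alpha>) (t n - s)"
    proof -
      have g1: "Gamma (1 - \<alpha>) \<noteq> 0" using Gp by linarith
      have a2: "1 - \<alpha> \<noteq> 0" using a1 by simp
      show ?thesis unfolding omega_def G using g1 a2 by (simp add: divide_simps)
    qed
    have "DERIV F s :> - ((1 - \<alpha>) * (t n - s) powr (1 - \<alpha> - 1) * (0 - 1)) / G"
      unfolding F_def using DERIV_cdivide[OF DERIV_minus[OF d], of G] by simp
    then have "DERIV F s :> omega (1 - \<alpha>) (t n - s)" using e by simp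
    then show "(F has_vector_derivative omega (1 - \<alpha>) (t n - s)) (at s)"
      by (simp add: has_real_derivative_iff_has_vector_derivative)
  qed
  then have "integral {t (k - 1)..t k} (\<lambda>s. omega (1 - \<alpha>) (t n - s)) = F (t k) - F (t (k - 1))"
    by (rule integral_unique)
  then have I: "integral {t (k - 1)..t k} (\<lambda>s. omega (1 - \<alpha>) (t n - s))
      = (pw (1 - \<alpha>) (t n - t (k - 1)) - pw (1 - \<alpha>) (t n - t k)) / G"
    by (simp add: F_def diff_divide_distrib)
  show ?thesis unfolding L1a_def I G_def tstep_def by simp
qed

lemma tstep_pos: "1 \<le> k \<Longrightarrow> k \<le> N \<Longrightarrow> tstep t k > 0"
  using tm unfolding tstep_def by auto

lemma Gpos: "Gamma (2 - \<alpha>) > 0" using a1 Gamma_real_pos[of "2-\<alpha>"] by linarith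

lemma L1a_pos:
  assumes k: "1 \<le> k" "k \<le> n" "n \<le> N"
  shows "L1a \<alpha> t n k > 0"
proof -
  have "pw (1 - \<alpha>) (t n - t k) < pw (1 - \<alpha>) (t n - t (k - 1))"
    using pw_strict_mono[of "1-\<alpha>"] a1 tm[of k] t_le[of k n] k by auto
  then show ?thesis using L1a_closed[OF k] Gpos tstep_pos[of k] k
    by (auto intro!: divide_pos_pos)
qed

lemma L1a_diag: assumes "1 \<le> n" "n \<le> N"
  shows "L1a \<alpha> t n n = tstep t n powr (- \<alpha>) / Gamma (2 - \<alpha>)"
proof -
  have tp: "tstep t n > 0" using tstep_pos assms by simp
  have "L1a \<alpha> t n n = tstep t n powr (1 - \<alpha>) / (Gamma (2 - \<alpha>) * tstep t n)"
    using L1a_closed[of n n] assms tp by (simp add: pw_pos pw_zero tstep_def)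
  also have "\<dots> = tstep t n powr (- \<alpha>) / Gamma (2 - \<alpha>)"
    using tp by (simp add: powr_diff field_simps powr_minus)
  finally show ?thesis .
qed

end

lemma pw_sh_deriv: assumes "x - s > 0"
  shows "DERIV (\<lambda>s. pw b (x - s)) s :> - (b * (x - s) powr (b - 1))"
proof -
  have d0: "DERIV (pw b) (x - s) :> b * (x - s) powr (b - 1)" by (rule pw_deriv[OF assms])
  have d1: "DERIV (\<lambda>s. x - s) s :> (0 - 1)" by (intro derivative_eq_intros) auto
  show ?thesis using DERIV_chain2[OF d0 d1] by simp
qed

lemma pw_sh_deriv': assumes "s - x > 0"
  shows "DERIV (\<lambda>s. pw b (s - x)) s :> b * (s - x) powr (b - 1)"
proof -
  have d0: "DERIV (pw b) (s - x) :> b * (s - x) powr (b - 1)" by (rule pw_deriv[OF assms])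
  have d1: "DERIV (\<lambda>s. s - x) s :> (1 - 0)" by (intro derivative_eq_intros) auto
  show ?thesis using DERIV_chain2[OF d0 d1] by simp
qed

lemma pw_sh_isCont: assumes "b > 0" shows "isCont (\<lambda>s. pw b (x - s)) s"
  by (rule isCont_o2[OF _ pw_isCont[OF assms]]) (intro continuous_intros)

lemma pw_sh_isCont': assumes "b > 0" shows "isCont (\<lambda>s. pw b (s - x)) s"
  by (rule isCont_o2[OF _ pw_isCont[OF assms]]) (intro continuous_intros)

lemma tp2_core:
  fixes \<beta> a b c x y :: real
  assumes \<beta>: "0 < \<beta>" "\<beta> < 1" and abc: "a < b" "b < c" "c \<le> x" "x < y"
  shows "(pw \<beta> (y - b) - pw \<beta> (y - c)) * (pw \<beta> (x - a) - pw \<beta> (x - b))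
       \<le> (pw \<beta> (y - a) - pw \<beta> (y - b)) * (pw \<beta> (x - b) - pw \<beta> (x - c))"
proof -
  define f where "f = (\<lambda>s. pw \<beta> (x - s))"
  define g where "g = (\<lambda>s. pw \<beta> (y - s))"
  define f' where "f' = (\<lambda>s. - (\<beta> * (x - s) powr (\<beta> - 1)))"
  define g' where "g' = (\<lambda>s. - (\<beta> * (y - s) powr (\<beta> - 1)))"
  have mvt: "\<exists>\<xi>. p < \<xi> \<and> \<xi> < q \<and> (f q - f p) * g' \<xi> = (g q - g p) * f' \<xi>"
    if "p < q" "q \<le> x" for p q
  proof (rule GMVT'[OF \<open>p < q\<close>])
    show "isCont f z" for z unfolding f_def using pw_sh_isCont \<beta> by blast
    show "isCont g z" for z unfolding g_def using pw_sh_isCont \<beta> by blast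
    show "DERIV g z :> g' z" if "p < z" "z < q" for z
      unfolding g_def g'_def using that \<open>q \<le> x\<close> abc by (intro pw_sh_deriv) auto
    show "DERIV f z :> f' z" if "p < z" "z < q" for z
      unfolding f_def f'_def using that \<open>q \<le> x\<close> by (intro pw_sh_deriv) auto
  qed
  obtain \<xi>1 where x1: "a < \<xi>1" "\<xi>1 < b" "(f b - f a) * g' \<xi>1 = (g b - g a) * f' \<xi>1"
    using mvt[of a b] abc by auto
  obtain \<xi>2 where x2: "b < \<xi>2" "\<xi>2 < c" "(f c - f b) * g' \<xi>2 = (g c - g b) * f' \<xi>2"
    using mvt[of b c] abc by auto
  define Fx where "Fx = f a - f b"
  define Fy where "Fy = g a - g b"
  define Gx where "Gx = f b - f c"
  define Gy where "Gy = g b - g c"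
  define P1 where "P1 = (y - \<xi>1) powr (\<beta> - 1)"
  define Q1 where "Q1 = (x - \<xi>1) powr (\<beta> - 1)"
  define P2 where "P2 = (y - \<xi>2) powr (\<beta> - 1)"
  define Q2 where "Q2 = (x - \<xi>2) powr (\<beta> - 1)"
  have "\<beta> * (Fx * P1 - Fy * Q1) = 0"
    using x1(3) unfolding Fx_def Fy_def P1_def Q1_def f'_def g'_def by (simp add: algebra_simps)
  then have e1: "Fx * P1 = Fy * Q1" using \<beta> by simp
  have "\<beta> * (Gx * P2 - Gy * Q2) = 0"
    using x2(3) unfolding Gx_def Gy_def P2_def Q2_def f'_def g'_def by (simp add: algebra_simps)
  then have e2: "Gx * P2 = Gy * Q2" using \<beta> by simp
  have pos: "P1 > 0" "Q1 > 0" "P2 > 0" "Q2 > 0"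
    unfolding P1_def Q1_def P2_def Q2_def using x1 x2 abc by auto
  have Fy: "Fy > 0" unfolding Fy_def g_def using pw_strict_mono[of \<beta> "y - b" "y - a"] \<beta> abc by auto
  have Gy: "Gy > 0" unfolding Gy_def g_def using pw_strict_mono[of \<beta> "y - c" "y - b"] \<beta> abc by auto
  have r: "(x - \<xi>2) / (y - \<xi>2) < (x - \<xi>1) / (y - \<xi>1)"
  proof -
    have "(x - \<xi>2) * (y - \<xi>1) < (x - \<xi>1) * (y - \<xi>2)"
    proof -
      have "(x - \<xi>1) * (y - \<xi>2) - (x - \<xi>2) * (y - \<xi>1) = (y - x) * (\<xi>2 - \<xi>1)"
        by (simp add: algebra_simps)
      moreover have "(y - x) * (\<xi>2 - \<xi>1) > 0" using x1 x2 abc by auto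
      ultimately show ?thesis by linarith
    qed
    then show ?thesis using x1 x2 abc by (simp add: divide_simps)
  qed
  have "((x - \<xi>1) / (y - \<xi>1)) powr (\<beta> - 1) < ((x - \<xi>2) / (y - \<xi>2)) powr (\<beta> - 1)"
    by (rule powr_less_mono2_neg) (use \<beta> r x2 abc in auto)
  then have QP: "Q1 / P1 < Q2 / P2"
    unfolding P1_def Q1_def P2_def Q2_def using x1 x2 abc by (simp add: powr_divide)
  have "Fx = Fy * (Q1 / P1)" using e1 pos by (simp add: field_simps)
  then have h1: "Gy * Fx = (Fy * Gy) * (Q1 / P1)" by simp
  have "Gx = Gy * (Q2 / P2)" using e2 pos by (simp add: field_simps)
  then have h2: "Fy * Gx = (Fy * Gy) * (Q2 / P2)" by simp
  have "(Fy * Gy) * (Q1 / P1) \<le> (Fy * Gy) * (Q2 / P2)"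
    using QP Fy Gy by (intro mult_left_mono) auto
  then have "Gy * Fx \<le> Fy * Gx" using h1 h2 by simp
  then show ?thesis unfolding Fx_def Fy_def Gx_def Gy_def f_def g_def by (simp add: mult.commute)
qed

lemma col_core:
  fixes \<beta> a b x y :: real
  assumes \<beta>: "0 < \<beta>" "\<beta> < 1" and abc: "a < b" "b \<le> x" "x \<le> y"
  shows "pw \<beta> (y - a) - pw \<beta> (y - b) \<le> pw \<beta> (x - a) - pw \<beta> (x - b)"
proof (cases "x = y")
  case True then show ?thesis by simp
next
  case False
  then have xy: "x < y" using abc by simp
  define h where "h = (\<lambda>z. pw \<beta> (z - a) - pw \<beta> (z - b))"
  have "\<exists>l z. x < z \<and> z < y \<and> DERIV h z :> l \<and> h y - h x = (y - x) * l"
  proof (rule MVT[OF xy])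
    show "continuous_on {x..y} h" unfolding h_def
      using pw_sh_isCont' \<beta> by (intro continuous_at_imp_continuous_on ballI continuous_intros) auto
    show "h differentiable (at z)" if "x < z" "z < y" for z
    proof -
      have "DERIV (\<lambda>z. pw \<beta> (z - a)) z :> \<beta> * (z - a) powr (\<beta> - 1)"
        using pw_sh_deriv'[where s=z and x=a and b=\<beta>] that abc by auto
      moreover have "DERIV (\<lambda>z. pw \<beta> (z - b)) z :> \<beta> * (z - b) powr (\<beta> - 1)"
        using pw_sh_deriv'[where s=z and x=b and b=\<beta>] that abc by auto
      ultimately have "DERIV h z :> \<beta> * (z - a) powr (\<beta> - 1) - \<beta> * (z - b) powr (\<beta> - 1)"
        unfolding h_def by (rule DERIV_diff)
      then show ?thesis unfolding real_differentiable_def by blast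
    qed
  qed
  then obtain l z where z: "x < z" "z < y" "DERIV h z :> l" "h y - h x = (y - x) * l" by blast
  have da: "DERIV (\<lambda>z. pw \<beta> (z - a)) z :> \<beta> * (z - a) powr (\<beta> - 1)"
    using pw_sh_deriv'[where s=z and x=a and b=\<beta>] z abc by auto
  have db: "DERIV (\<lambda>z. pw \<beta> (z - b)) z :> \<beta> * (z - b) powr (\<beta> - 1)"
    using pw_sh_deriv'[where s=z and x=b and b=\<beta>] z abc by auto
  have "DERIV h z :> \<beta> * (z - a) powr (\<beta> - 1) - \<beta> * (z - b) powr (\<beta> - 1)"
    unfolding h_def by (rule DERIV_diff[OF da db])
  then have l: "l = \<beta> * (z - a) powr (\<beta> - 1) - \<beta> * (z - b) powr (\<beta> - 1)"
    using z(3) DERIV_unique by blast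
  have "(z - a) powr (\<beta> - 1) < (z - b) powr (\<beta> - 1)"
    by (rule powr_less_mono2_neg) (use \<beta> z abc in auto)
  then have "l \<le> 0" using l \<beta> by (simp add: mult_left_mono)
  then have "h y - h x \<le> 0" using z(4) xy by (simp add: mult_nonneg_nonpos)
  then show ?thesis unfolding h_def by simp
qed

declare Pk.simps[simp del]

definition Bk :: "real \<Rightarrow> (nat \<Rightarrow> real) \<Rightarrow> nat \<Rightarrow> nat \<Rightarrow> real" where
  "Bk \<alpha> t n j = Pk \<alpha> t n j - (if j < n then Pk \<alpha> t (n - 1) j else 0)"

lemma Pk_diag: "Pk \<alpha> t n n = 1 / L1a \<alpha> t n n"
  by (subst Pk.simps) simp

lemma Pk_rec: "k < n \<Longrightarrow> Pk \<alpha> t n k = (1 / L1a \<alpha> t k k) *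
           (\<Sum>j\<in>{k+1..n}. (L1a \<alpha> t j (k + 1) - L1a \<alpha> t j k) * Pk \<alpha> t n j)"
  by (subst Pk.simps) simp

context kern begin

lemma L1a_tp2:
  assumes "1 \<le> j" "j < k" "k < n" "n \<le> N"
  shows "L1a \<alpha> t n (j + 1) * L1a \<alpha> t k j \<le> L1a \<alpha> t n j * L1a \<alpha> t k (j + 1)"
proof -
  let ?p = "pw (1 - \<alpha>)"
  define G where "G = Gamma (2 - \<alpha>)"
  have Gp: "G > 0" using Gpos G_def by simp
  have s1: "tstep t j > 0" "tstep t (j+1) > 0" using tstep_pos assms by auto
  have ck: "L1a \<alpha> t k j = (?p (t k - t (j - 1)) - ?p (t k - t j)) / (G * tstep t j)"
    using L1a_closed[of j k] assms G_def by simp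
  have ck1: "L1a \<alpha> t k (j+1) = (?p (t k - t j) - ?p (t k - t (j+1))) / (G * tstep t (j+1))"
    using L1a_closed[of "j+1" k] assms G_def by simp
  have cn: "L1a \<alpha> t n j = (?p (t n - t (j - 1)) - ?p (t n - t j)) / (G * tstep t j)"
    using L1a_closed[of j n] assms G_def by simp
  have cn1: "L1a \<alpha> t n (j+1) = (?p (t n - t j) - ?p (t n - t (j+1))) / (G * tstep t (j+1))"
    using L1a_closed[of "j+1" n] assms G_def by simp
  have core: "(?p (t n - t j) - ?p (t n - t (j+1))) * (?p (t k - t (j - 1)) - ?p (t k - t j))
       \<le> (?p (t n - t (j - 1)) - ?p (t n - t j)) * (?p (t k - t j) - ?p (t k - t (j+1)))"
  proof (rule tp2_core)
    show "0 < 1 - \<alpha>" "1 - \<alpha> < 1" using a0 a1 by auto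
    show "t (j - 1) < t j" using tm assms by auto
    show "t j < t (j + 1)" using tm[of "j+1"] assms by auto
    show "t (j + 1) \<le> t k" using t_le assms by auto
    show "t k < t n" using t_less assms by auto
  qed
  define D where "D = (G * tstep t (j+1)) * (G * tstep t j)"
  have Dp: "D > 0" unfolding D_def using Gp s1 by auto
  have "L1a \<alpha> t n (j + 1) * L1a \<alpha> t k j
      = (?p (t n - t j) - ?p (t n - t (j+1))) * (?p (t k - t (j - 1)) - ?p (t k - t j)) / D"
    unfolding cn1 ck D_def by simp
  also have "\<dots> \<le> (?p (t n - t (j - 1)) - ?p (t n - t j)) * (?p (t k - t j) - ?p (t k - t (j+1))) / D"
    using core Dp by (simp add: divide_right_mono)
  also have "\<dots> = L1a \<alpha> t n j * L1a \<alpha> t k (j + 1)"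
    unfolding cn ck1 D_def by (simp add: mult.commute)
  finally show ?thesis .
qed

lemma L1a_col:
  assumes "1 \<le> j" "j \<le> n" "n \<le> N"
  shows "L1a \<alpha> t n 1 \<le> L1a \<alpha> t j 1"
proof -
  let ?p = "pw (1 - \<alpha>)"
  define G where "G = Gamma (2 - \<alpha>)"
  have Gp: "G > 0" using Gpos G_def by simp
  have s1: "tstep t 1 > 0" using tstep_pos assms by auto
  have core: "?p (t n - t 0) - ?p (t n - t 1) \<le> ?p (t j - t 0) - ?p (t j - t 1)"
  proof (rule col_core)
    show "0 < 1 - \<alpha>" "1 - \<alpha> < 1" using a0 a1 by auto
    show "t 0 < t 1" using tm[of 1] assms by auto
    show "t 1 \<le> t j" "t j \<le> t n" using t_le assms by auto
  qed
  show ?thesis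
    using L1a_closed[of 1 n] L1a_closed[of 1 j] assms G_def core Gp s1
    by (simp add: divide_right_mono)
qed

lemma Pk_sum:
  assumes "n \<le> N" "1 \<le> k" "k \<le> n"
  shows "(\<Sum>m=k..n. Pk \<alpha> t n m * L1a \<alpha> t m k) = 1"
proof -
  have "\<forall>k. 1 \<le> k \<longrightarrow> k \<le> n \<longrightarrow> n - k = d \<longrightarrow> (\<Sum>m=k..n. Pk \<alpha> t n m * L1a \<alpha> t m k) = 1" for d
  proof (induction d)
    case 0
    show ?case
    proof (intro allI impI)
      fix k assume k: "1 \<le> k" "k \<le> n" "n - k = 0"
      then have "k = n" by simp
      moreover have "L1a \<alpha> t n n > 0" using L1a_pos k assms by auto
      ultimately show "(\<Sum>m=k..n. Pk \<alpha> t n m * L1a \<alpha> t m k) = 1" by (simp add: Pk_diag)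
    qed
  next
    case (Suc d)
    show ?case
    proof (intro allI impI)
      fix k assume k: "1 \<le> k" "k \<le> n" "n - k = Suc d"
      then have kn: "k < n" by simp
      have Akk: "L1a \<alpha> t k k > 0" using L1a_pos k assms by auto
      have IH: "(\<Sum>m=k+1..n. Pk \<alpha> t n m * L1a \<alpha> t m (k+1)) = 1"
        using Suc.IH k kn by auto
      have "(\<Sum>m=k..n. Pk \<alpha> t n m * L1a \<alpha> t m k)
          = Pk \<alpha> t n k * L1a \<alpha> t k k + (\<Sum>m=k+1..n. Pk \<alpha> t n m * L1a \<alpha> t m k)"
        using kn by (simp add: sum.atLeast_Suc_atMost)
      also have "Pk \<alpha> t n k * L1a \<alpha> t k k
          = (\<Sum>j\<in>{k+1..n}. (L1a \<alpha> t j (k + 1) - L1a \<alpha> t j k) * Pk \<alpha> t n j)"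
        using Pk_rec[OF kn] Akk by simp
      also have "\<dots> + (\<Sum>m=k+1..n. Pk \<alpha> t n m * L1a \<alpha> t m k)
          = (\<Sum>m=k+1..n. Pk \<alpha> t n m * L1a \<alpha> t m (k+1))"
        by (simp add: sum.distrib[symmetric] algebra_simps)
      finally show "(\<Sum>m=k..n. Pk \<alpha> t n m * L1a \<alpha> t m k) = 1" using IH by simp
    qed
  qed
  then show ?thesis using assms by blast
qed

lemma Bk_diag: "Bk \<alpha> t n n = 1 / L1a \<alpha> t n n"
  by (simp add: Bk_def Pk_diag)

lemma BA:
  assumes "n \<le> N" "1 \<le> k" "k \<le> n"
  shows "(\<Sum>j=k..n. Bk \<alpha> t n j * L1a \<alpha> t j k) = (if k = n then 1 else 0)"
proof (cases "k = n")
  case True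
  have "L1a \<alpha> t n n > 0" using L1a_pos assms by auto
  then show ?thesis using True by (simp add: Bk_diag)
next
  case False
  then have kn: "k < n" using assms by simp
  have s2: "(\<Sum>j=k..n. (if j < n then Pk \<alpha> t (n - 1) j else 0) * L1a \<alpha> t j k)
          = (\<Sum>j=k..n-1. Pk \<alpha> t (n - 1) j * L1a \<alpha> t j k)"
  proof -
    have e: "{k..n} = insert n {k..n-1}" using kn by auto
    have "(\<Sum>j=k..n. (if j < n then Pk \<alpha> t (n - 1) j else 0) * L1a \<alpha> t j k)
        = (\<Sum>j=k..n-1. (if j < n then Pk \<alpha> t (n - 1) j else 0) * L1a \<alpha> t j k)"
      unfolding e using kn by (subst sum.insert) auto
    also have "\<dots> = (\<Sum>j=k..n-1. Pk \<alpha> t (n - 1) j * L1a \<alpha> t j k)"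
      by (rule sum.cong) (use kn in auto)
    finally show ?thesis .
  qed
  have "(\<Sum>j=k..n. Bk \<alpha> t n j * L1a \<alpha> t j k)
       = (\<Sum>j=k..n. Pk \<alpha> t n j * L1a \<alpha> t j k)
         - (\<Sum>j=k..n. (if j < n then Pk \<alpha> t (n - 1) j else 0) * L1a \<alpha> t j k)"
    unfolding Bk_def by (simp add: sum_subtractf left_diff_distrib)
  also have "\<dots> = 1 - 1" unfolding s2 using Pk_sum[of n k] Pk_sum[of "n-1" k] assms kn by simp
  finally show ?thesis using False by simp
qed

lemma Bk_nonpos:
  assumes "1 \<le> j" "j < n" "n \<le> N"
  shows "Bk \<alpha> t n j \<le> 0"
proof -
  let ?B = "Bk \<alpha> t n" and ?A = "L1a \<alpha> t"
  have eq: "(\<Sum>k=j..n. ?B k * ?A k j) = 0" if "1 \<le> j" "j < n" for j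
    using BA[of n j] that assms by simp
  have Bn: "?B n > 0" using Bk_diag L1a_pos[of n n] assms by simp
  have "\<forall>j. 1 \<le> j \<longrightarrow> j < n \<longrightarrow> n - j = d \<longrightarrow> ?B j \<le> 0" for d
  proof (induction d rule: less_induct)
    case (less d)
    show ?case
    proof (intro allI impI)
      fix j assume j: "1 \<le> j" "j < n" "n - j = d"
      show "?B j \<le> 0"
      proof (cases "j = n - 1")
        case True
        have e: "{j..n} = {j, n}" using True j by auto
        have "?B j * ?A j j + ?B n * ?A n j = 0" using eq[OF j(1,2)] True j unfolding e by simp
        moreover have "?A j j > 0" "?A n j > 0" using L1a_pos j assms by auto
        ultimately have "?B j * ?A j j = - (?B n * ?A n j)" by simp
        moreover have "?B n * ?A n j > 0" using Bn \<open>?A n j > 0\<close> by simp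
        ultimately have "?B j * ?A j j < 0" by simp
        then show ?thesis using \<open>?A j j > 0\<close> by (simp add: mult_less_0_iff)
      next
        case False
        then have j1: "j + 1 < n" using j by simp
        have e1: "?B j * ?A j j + (\<Sum>k=j+1..n. ?B k * ?A k j) = 0"
          using eq[OF j(1,2)] j by (simp add: sum.atLeast_Suc_atMost)
        have e2: "(\<Sum>k=j+1..n. ?B k * ?A k (j+1)) = 0" using eq[of "j+1"] j1 by simp
        have "?A n (j+1) * (?B j * ?A j j + (\<Sum>k=j+1..n. ?B k * ?A k j))
              - ?A n j * (\<Sum>k=j+1..n. ?B k * ?A k (j+1)) = 0" using e1 e2 by simp
        moreover have "(\<Sum>k=j+1..n. ?B k * (?A n (j+1) * ?A k j - ?A n j * ?A k (j+1)))
           = ?A n (j+1) * (\<Sum>k=j+1..n. ?B k * ?A k j) - ?A n j * (\<Sum>k=j+1..n. ?B k * ?A k (j+1))"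
          by (simp add: sum_distrib_left sum_subtractf[symmetric] algebra_simps)
        ultimately have e3: "?A n (j+1) * ?A j j * ?B j
             + (\<Sum>k=j+1..n. ?B k * (?A n (j+1) * ?A k j - ?A n j * ?A k (j+1))) = 0"
          by (simp add: algebra_simps)
        have "(\<Sum>k=j+1..n. ?B k * (?A n (j+1) * ?A k j - ?A n j * ?A k (j+1))) \<ge> 0"
        proof (rule sum_nonneg)
          fix k assume k: "k \<in> {j+1..n}"
          show "?B k * (?A n (j+1) * ?A k j - ?A n j * ?A k (j+1)) \<ge> 0"
          proof (cases "k = n")
            case True then show ?thesis by (simp add: algebra_simps)
          next
            case False
            then have kn: "k < n" using k by simp
            have "?B k \<le> 0" using less.IH[of "n - k"] kn k j by auto
            moreover have "?A n (j+1) * ?A k j - ?A n j * ?A k (j+1) \<le> 0"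
              using L1a_tp2[of j k n] j k kn assms by simp
            ultimately show ?thesis by (simp add: mult_nonpos_nonpos)
          qed
        qed
        then have "?A n (j+1) * ?A j j * ?B j \<le> 0" using e3 by linarith
        moreover have "?A n (j+1) * ?A j j > 0" using L1a_pos j j1 assms by auto
        ultimately show ?thesis
        proof -
          assume h1: "?A n (j+1) * ?A j j * ?B j \<le> 0" and h2: "?A n (j+1) * ?A j j > 0"
          show ?thesis
          proof (rule ccontr)
            assume "\<not> ?B j \<le> 0"
            then have "?B j > 0" by simp
            with h2 have "?A n (j+1) * ?A j j * ?B j > 0" by (rule mult_pos_pos)
            with h1 show False by simp
          qed
        qed
      qed
    qed
  qed
  then show ?thesis using assms by blast
qed

lemma Bk_rowsum:
  assumes "1 \<le> n" "n \<le> N"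
  shows "(\<Sum>j=1..n. Bk \<alpha> t n j) \<ge> 0"
proof -
  let ?B = "Bk \<alpha> t n" and ?A = "L1a \<alpha> t"
  have An: "?A n 1 > 0" using L1a_pos assms by auto
  have "(\<Sum>j=1..n. ?B j * ?A j 1) \<ge> 0" using BA[of n 1] assms by simp
  then have "(\<Sum>j=1..n. ?B j * ?A j 1) / ?A n 1 \<ge> 0" using An by simp
  also have "(\<Sum>j=1..n. ?B j * ?A j 1) / ?A n 1 = (\<Sum>j=1..n. ?B j * (?A j 1 / ?A n 1))"
    by (simp add: sum_divide_distrib)
  also have "\<dots> \<le> (\<Sum>j=1..n. ?B j)"
  proof (rule sum_mono)
    fix j assume j: "j \<in> {1..n}"
    show "?B j * (?A j 1 / ?A n 1) \<le> ?B j"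
    proof (cases "j = n")
      case True then show ?thesis using An by simp
    next
      case False
      then have "?B j \<le> 0" using Bk_nonpos j assms by auto
      moreover have "?A j 1 / ?A n 1 \<ge> 1" using L1a_col[of j n] j assms An by simp
      ultimately have "?B j * (?A j 1 / ?A n 1 - 1) \<le> 0" by (intro mult_nonpos_nonneg) auto
      then show ?thesis by (simp add: algebra_simps)
    qed
  qed
  finally show ?thesis .
qed

end

definition per1 :: "nat \<Rightarrow> (int \<Rightarrow> real) \<Rightarrow> bool" where
  "per1 M f \<longleftrightarrow> (\<forall>i. f (i + int M) = f i)"

lemma shift_p:
  assumes "per1 M f" "M > 0"
  shows "(\<Sum>i\<in>{1..int M}. f (i + 1)) = (\<Sum>i\<in>{1..int M}. f i)"
proof -
  have "(\<Sum>i\<in>{1..int M}. f (i + 1)) = (\<Sum>i\<in>{2..int M + 1}. f i)"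
    by (rule sum.reindex_bij_witness[of _ "\<lambda>i. i - 1" "\<lambda>i. i + 1"]) auto
  also have "{2..int M + 1} = insert (int M + 1) {2..int M}" using assms by auto
  also have "sum f \<dots> = f (int M + 1) + (\<Sum>i\<in>{2..int M}. f i)" by (subst sum.insert) auto
  also have "f (int M + 1) = f 1" using assms(1) unfolding per1_def by (metis add.commute)
  also have "f 1 + (\<Sum>i\<in>{2..int M}. f i) = (\<Sum>i\<in>insert 1 {2..int M}. f i)" by (subst sum.insert) auto
  also have "insert 1 {2..int M} = {1..int M}" using assms by auto
  finally show ?thesis .
qed

lemma shift_m:
  assumes "per1 M f" "M > 0"
  shows "(\<Sum>i\<in>{1..int M}. f (i - 1)) = (\<Sum>i\<in>{1..int M}. f i)"
proof -
  have "per1 M (\<lambda>i. f (i - 1))" using assms(1) unfolding per1_def by (metis diff_add_eq)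
  from shift_p[OF this assms(2)] show ?thesis by simp
qed

lemma lap1:
  assumes "per1 M v" "per1 M w" "M > 0"
  shows "(\<Sum>i\<in>{1..int M}. (v (i + 1) - 2 * v i + v (i - 1)) * w i)
       = (\<Sum>i\<in>{1..int M}. v i * (w (i + 1) - 2 * w i + w (i - 1)))"
proof -
  have p1: "per1 M (\<lambda>i. v (i + 1) * w i)" unfolding per1_def
  proof
    fix i
    have "v (i + int M + 1) = v (i + 1)"
      using assms(1) unfolding per1_def by (metis add.commute add.left_commute)
    then show "v (i + int M + 1) * w (i + int M) = v (i + 1) * w i"
      using assms(2) unfolding per1_def by simp
  qed
  have p2: "per1 M (\<lambda>i. v (i - 1) * w i)" unfolding per1_def
  proof
    fix i
    have "v (i + int M - 1) = v (i - 1)"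
      using assms(1) unfolding per1_def by (metis diff_add_eq)
    then show "v (i + int M - 1) * w (i + int M) = v (i - 1) * w i"
      using assms(2) unfolding per1_def by simp
  qed
  have X1: "(\<Sum>i\<in>{1..int M}. v (i + 1) * w i) = (\<Sum>i\<in>{1..int M}. v i * w (i - 1))"
    using shift_m[OF p1 assms(3)] by simp
  have X2: "(\<Sum>i\<in>{1..int M}. v (i - 1) * w i) = (\<Sum>i\<in>{1..int M}. v i * w (i + 1))"
    using shift_p[OF p2 assms(3)] by simp
  have "(\<Sum>i\<in>{1..int M}. (v (i + 1) - 2 * v i + v (i - 1)) * w i)
      = (\<Sum>i\<in>{1..int M}. v (i + 1) * w i) - 2 * (\<Sum>i\<in>{1..int M}. v i * w i) + (\<Sum>i\<in>{1..int M}. v (i - 1) * w i)"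
    by (simp add: algebra_simps sum.distrib sum_subtractf sum_distrib_left)
  also have "\<dots> = (\<Sum>i\<in>{1..int M}. v i * w (i - 1)) - 2 * (\<Sum>i\<in>{1..int M}. v i * w i) + (\<Sum>i\<in>{1..int M}. v i * w (i + 1))"
    using X1 X2 by simp
  also have "\<dots> = (\<Sum>i\<in>{1..int M}. v i * (w (i + 1) - 2 * w i + w (i - 1)))"
    by (simp add: algebra_simps sum.distrib sum_subtractf sum_distrib_left)
  finally show ?thesis .
qed

definition SS :: "nat \<Rightarrow> (int \<Rightarrow> int \<Rightarrow> real) \<Rightarrow> real" where
  "SS M f = (\<Sum>i\<in>{1..int M}. \<Sum>j\<in>{1..int M}. f i j)"

lemma SS_add: "SS M (\<lambda>i j. f i j + g i j) = SS M f + SS M g"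
  unfolding SS_def by (simp add: sum.distrib)
lemma SS_diff: "SS M (\<lambda>i j. f i j - g i j) = SS M f - SS M g"
  unfolding SS_def by (simp add: sum_subtractf)
lemma SS_cmult: "SS M (\<lambda>i j. c * f i j) = c * SS M f"
  unfolding SS_def by (simp add: sum_distrib_left)
lemma SS_mono: "(\<And>i j. i \<in> {1..int M} \<Longrightarrow> j \<in> {1..int M} \<Longrightarrow> f i j \<le> g i j) \<Longrightarrow> SS M f \<le> SS M g"
  unfolding SS_def by (intro sum_mono) auto
lemma SS_cong: "(\<And>i j. i \<in> {1..int M} \<Longrightarrow> j \<in> {1..int M} \<Longrightarrow> f i j = g i j) \<Longrightarrow> SS M f = SS M g"
  unfolding SS_def by (intro sum.cong) auto
lemma SS_nonpos: "(\<And>i j. i \<in> {1..int M} \<Longrightarrow> j \<in> {1..int M} \<Longrightarrow> f i j \<le> 0) \<Longrightarrow> SS M f \<le> 0"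
  unfolding SS_def by (intro sum_nonpos) auto
lemma SS_cdiv: "SS M (\<lambda>i j. f i j / c) = SS M f / c"
  unfolding SS_def by (simp add: sum_divide_distrib)
lemma SS_sum: "SS M (\<lambda>i j. \<Sum>m\<in>A. f m i j) = (\<Sum>m\<in>A. SS M (f m))"
  unfolding SS_def by (simp add: sum.swap[of _ A])

lemma inner_SS: "inner_h M h v w = h\<^sup>2 * SS M (\<lambda>i j. v i j * w i j)"
  unfolding inner_h_def SS_def by simp

lemma normsq_SS: "(norm_h M h v)\<^sup>2 = h\<^sup>2 * SS M (\<lambda>i j. (v i j)\<^sup>2)"
proof -
  have "inner_h M h v v \<ge> 0" unfolding inner_h_def
    by (rule mult_nonneg_nonneg[OF zero_le_power2]) (intro sum_nonneg, simp)
  then show ?thesis unfolding norm_h_def by (simp add: inner_SS power2_eq_square)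
qed

lemma gp_x: "grid_periodic M v \<Longrightarrow> per1 M (\<lambda>i. v i j)"
  unfolding grid_periodic_def per1_def by simp
lemma gp_y: "grid_periodic M v \<Longrightarrow> per1 M (\<lambda>j. v i j)"
  unfolding grid_periodic_def per1_def by simp

lemma opL_per: assumes "grid_periodic M v" shows "grid_periodic M (opL h v)"
  unfolding grid_periodic_def
proof (intro allI conjI)
  fix i j
  have a: "v (a + int M) b = v a b" "v a (b + int M) = v a b" for a b
    using assms unfolding grid_periodic_def by auto
  have b: "v (i + int M + 1) j = v (i + 1) j" "v (i + int M - 1) j = v (i - 1) j"
       "v i (j + int M + 1) = v i (j + 1)" "v i (j + int M - 1) = v i (j - 1)"
    using a by (metis add.commute add.left_commute, metis diff_add_eq,
                metis add.commute add.left_commute, metis diff_add_eq)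
  show "opL h v (i + int M) j = opL h v i j" "opL h v i (j + int M) = opL h v i j"
    unfolding opL_def lap_h_def using a b by (simp_all add: algebra_simps)
qed

lemma selfadj:
  assumes "grid_periodic M v" "grid_periodic M w" "M > 0"
  shows "SS M (\<lambda>i j. opL h v i j * w i j) = SS M (\<lambda>i j. v i j * opL h w i j)"
proof -
  let ?Dx = "\<lambda>v i j. v (i + 1) j - 2 * v i j + v (i - 1) j"
  let ?Dy = "\<lambda>v i j. v i (j + 1) - 2 * v i j + v i (j - 1)"
  have x: "SS M (\<lambda>i j. ?Dx v i j * w i j) = SS M (\<lambda>i j. v i j * ?Dx w i j)"
  proof -
    have "SS M (\<lambda>i j. ?Dx v i j * w i j) = (\<Sum>j\<in>{1..int M}. \<Sum>i\<in>{1..int M}. ?Dx v i j * w i j)"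
      unfolding SS_def by (rule sum.swap)
    also have "\<dots> = (\<Sum>j\<in>{1..int M}. \<Sum>i\<in>{1..int M}. v i j * ?Dx w i j)"
      by (rule sum.cong[OF refl], rule lap1[OF gp_x[OF assms(1)] gp_x[OF assms(2)] assms(3)])
    also have "\<dots> = SS M (\<lambda>i j. v i j * ?Dx w i j)"
      unfolding SS_def by (rule sum.swap)
    finally show ?thesis .
  qed
  have y: "SS M (\<lambda>i j. ?Dy v i j * w i j) = SS M (\<lambda>i j. v i j * ?Dy w i j)"
    unfolding SS_def
    by (rule sum.cong[OF refl], rule lap1[OF gp_y[OF assms(1)] gp_y[OF assms(2)] assms(3)])
  have e1: "SS M (\<lambda>i j. opL h v i j * w i j) = SS M (\<lambda>i j. v i j * w i j)
      + SS M (\<lambda>i j. ?Dx v i j * w i j) / h\<^sup>2 + SS M (\<lambda>i j. ?Dy v i j * w i j) / h\<^sup>2"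
    by (simp add: SS_add[symmetric] SS_cdiv[symmetric] opL_def lap_h_def algebra_simps add_divide_distrib diff_divide_distrib)
  have e2: "SS M (\<lambda>i j. v i j * opL h w i j) = SS M (\<lambda>i j. v i j * w i j)
      + SS M (\<lambda>i j. v i j * ?Dx w i j) / h\<^sup>2 + SS M (\<lambda>i j. v i j * ?Dy w i j) / h\<^sup>2"
    by (simp add: SS_add[symmetric] SS_cdiv[symmetric] opL_def lap_h_def algebra_simps add_divide_distrib diff_divide_distrib)
  show ?thesis using e1 e2 x y by simp
qed

definition Fn :: "real \<Rightarrow> real \<Rightarrow> real \<Rightarrow> real" where
  "Fn g \<epsilon> x = x ^ 4 / 4 - g / 3 * x ^ 3 - \<epsilon> / 2 * x\<^sup>2"

lemma Fn_ineq:
  fixes a b g \<epsilon> :: real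
  shows "Fn g \<epsilon> a - Fn g \<epsilon> b \<le> fnl g \<epsilon> a * (a - b) + (4 * g\<^sup>2 + 3 * \<epsilon>) / 6 * (a - b)\<^sup>2"
proof -
  define d where "d = a - b"
  have bd: "b = a - d" using d_def by simp
  define Q where "Q = (1/4) * (d - 2 * a + 2 * g / 3)\<^sup>2 + (1/2) * (a - g / 3)\<^sup>2 + g\<^sup>2 / 2"
  have Q: "Q \<ge> 0" unfolding Q_def by (intro add_nonneg_nonneg) auto
  have "fnl g \<epsilon> a * (a - b) + (4 * g\<^sup>2 + 3 * \<epsilon>) / 6 * (a - b)\<^sup>2 - (Fn g \<epsilon> a - Fn g \<epsilon> b) = d\<^sup>2 * Q"
    unfolding bd Q_def Fn_def fnl_def by (simp add: power2_eq_square power3_eq_cube power4_eq_xxxx field_simps)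
  moreover have "d\<^sup>2 * Q \<ge> 0" using Q by simp
  ultimately show ?thesis by linarith
qed

lemma opL_diff: "opL h (\<lambda>i j. f i j - g i j) i j = opL h f i j - opL h g i j"
  unfolding opL_def lap_h_def by (simp add: add_divide_distrib[symmetric] diff_divide_distrib[symmetric] algebra_simps)

lemma norm4_SS: "norm4_pow4 M h v = h\<^sup>2 * SS M (\<lambda>i j. (v i j) ^ 4)"
  unfolding norm4_pow4_def SS_def by simp

lemma energy_SS:
  "energy M h g \<epsilon> v = h\<^sup>2 * SS M (\<lambda>i j. 1/2 * (opL h v i j)\<^sup>2 + Fn g \<epsilon> (v i j))"
proof -
  have "energy M h g \<epsilon> v = h\<^sup>2 * (((1/2 * SS M (\<lambda>i j. (opL h v i j)\<^sup>2) + 1/4 * SS M (\<lambda>i j. (v i j)^4))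
      - g/3 * SS M (\<lambda>i j. (v i j)\<^sup>2 * v i j)) - \<epsilon>/2 * SS M (\<lambda>i j. (v i j)\<^sup>2))"
    unfolding energy_def normsq_SS inner_SS norm4_SS by (simp add: algebra_simps)
  also have "((1/2 * SS M (\<lambda>i j. (opL h v i j)\<^sup>2) + 1/4 * SS M (\<lambda>i j. (v i j)^4))
      - g/3 * SS M (\<lambda>i j. (v i j)\<^sup>2 * v i j)) - \<epsilon>/2 * SS M (\<lambda>i j. (v i j)\<^sup>2)
      = SS M (\<lambda>i j. ((1/2 * (opL h v i j)\<^sup>2 + 1/4 * (v i j)^4) - g/3 * ((v i j)\<^sup>2 * v i j)) - \<epsilon>/2 * (v i j)\<^sup>2)"
    by (simp only: SS_add SS_diff SS_cmult)
  also have "(\<lambda>i j. ((1/2 * (opL h v i j)\<^sup>2 + 1/4 * (v i j)^4) - g/3 * ((v i j)\<^sup>2 * v i j)) - \<epsilon>/2 * (v i j)\<^sup>2)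
      = (\<lambda>i j. 1/2 * (opL h v i j)\<^sup>2 + Fn g \<epsilon> (v i j))"
    by (auto simp: fun_eq_iff Fn_def power2_eq_square power3_eq_cube)
  finally show ?thesis .
qed

lemma energy_diff:
  assumes pv: "grid_periodic M v" and pv': "grid_periodic M v'" and M: "M > 0"
  shows "energy M h g \<epsilon> v - energy M h g \<epsilon> v'
     \<le> h\<^sup>2 * SS M (\<lambda>i j. mu_h g \<epsilon> h v i j * (v i j - v' i j) + (4 * g\<^sup>2 + 3 * \<epsilon>) / 6 * (v i j - v' i j)\<^sup>2)"
proof -
  define w where "w = (\<lambda>i j. v i j - v' i j)"
  define c where "c = (4 * g\<^sup>2 + 3 * \<epsilon>) / 6"
  have pw: "grid_periodic M w" using pv pv' unfolding grid_periodic_def w_def by simp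
  have vv: "v' = (\<lambda>i j. v i j - w i j)" unfolding w_def by simp
  have Lv': "opL h v' i j = opL h v i j - opL h w i j" for i j
    by (subst vv) (rule opL_diff)
  have pt: "1/2 * (opL h v i j)\<^sup>2 + Fn g \<epsilon> (v i j) - (1/2 * (opL h v' i j)\<^sup>2 + Fn g \<epsilon> (v' i j))
      \<le> opL h v i j * opL h w i j + (fnl g \<epsilon> (v i j) * w i j + c * (w i j)\<^sup>2)" for i j
  proof -
    have "1/2 * (opL h v i j)\<^sup>2 - 1/2 * (opL h v' i j)\<^sup>2 = opL h v i j * opL h w i j - 1/2 * (opL h w i j)\<^sup>2"
      unfolding Lv' by (simp add: algebra_simps power2_eq_square)
    moreover have "Fn g \<epsilon> (v i j) - Fn g \<epsilon> (v' i j) \<le> fnl g \<epsilon> (v i j) * w i j + c * (w i j)\<^sup>2"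
      using Fn_ineq[of g \<epsilon> "v i j" "v' i j"] unfolding w_def c_def by simp
    moreover have "(opL h w i j)\<^sup>2 \<ge> 0" by simp
    ultimately show ?thesis by linarith
  qed
  have "energy M h g \<epsilon> v - energy M h g \<epsilon> v'
      = h\<^sup>2 * SS M (\<lambda>i j. 1/2 * (opL h v i j)\<^sup>2 + Fn g \<epsilon> (v i j) - (1/2 * (opL h v' i j)\<^sup>2 + Fn g \<epsilon> (v' i j)))"
    unfolding energy_SS SS_diff by (simp add: algebra_simps)
  also have "\<dots> \<le> h\<^sup>2 * SS M (\<lambda>i j. opL h v i j * opL h w i j + (fnl g \<epsilon> (v i j) * w i j + c * (w i j)\<^sup>2))"
    by (intro mult_left_mono SS_mono pt) auto
  also have "SS M (\<lambda>i j. opL h v i j * opL h w i j + (fnl g \<epsilon> (v i j) * w i j + c * (w i j)\<^sup>2))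
      = SS M (\<lambda>i j. opL h (opL h v) i j * w i j) + SS M (\<lambda>i j. fnl g \<epsilon> (v i j) * w i j + c * (w i j)\<^sup>2)"
    unfolding SS_add selfadj[OF opL_per[OF pv] pw M] ..
  also have "\<dots> = SS M (\<lambda>i j. mu_h g \<epsilon> h v i j * w i j + c * (w i j)\<^sup>2)"
    unfolding SS_add[symmetric] mu_h_def by (simp add: algebra_simps)
  finally show ?thesis unfolding w_def c_def .
qed

lemma scalar_key:
  fixes b m :: "nat \<Rightarrow> real" and c w :: real and n :: nat
  assumes n: "1 \<le> n" and bn: "b n > 0" and bj: "\<And>j. 1 \<le> j \<Longrightarrow> j < n \<Longrightarrow> b j \<le> 0"
    and rs: "(\<Sum>j=1..n. b j) \<ge> 0" and c: "2 * c * b n \<le> 1"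
    and w: "w = - (\<Sum>j=1..n. b j * m j)"
  shows "m n * w + c * w\<^sup>2 + 1/2 * (\<Sum>j=1..n. b j * (m j)\<^sup>2) \<le> 0"
proof -
  define S where "S = {1..<n}"
  have ins: "{1..n} = insert n S" unfolding S_def using n by auto
  have nS: "n \<notin> S" "finite S" unfolding S_def by auto
  define p where "p = b n"
  define C where "C = (\<Sum>j\<in>S. - b j)"
  define X where "X = (\<Sum>j\<in>S. - b j * m j)"
  define W where "W = (\<Sum>j\<in>S. - b j * (m j)\<^sup>2)"
  have Cp: "C \<le> p" using rs unfolding ins C_def p_def using nS by (simp add: sum_negf)
  have wX: "w = X - p * m n" unfolding w ins X_def p_def using nS by (simp add: sum_negf)
  have sW: "(\<Sum>j=1..n. b j * (m j)\<^sup>2) = p * (m n)\<^sup>2 - W"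
    unfolding ins W_def p_def using nS by (simp add: sum_negf)
  have pp: "p > 0" using bn p_def by simp
  define l where "l = X / p"
  have q: "0 \<le> (\<Sum>j\<in>S. - b j * (m j - l)\<^sup>2)"
    by (rule sum_nonneg) (use bj in \<open>auto simp: S_def intro!: mult_nonpos_nonneg\<close>)
  also have "(\<Sum>j\<in>S. - b j * (m j - l)\<^sup>2) = W - 2 * l * X + l\<^sup>2 * C"
    unfolding W_def X_def C_def
    by (simp add: power2_eq_square algebra_simps sum.distrib sum_subtractf sum_distrib_left sum_negf)
  finally have q2: "0 \<le> W - 2 * l * X + l\<^sup>2 * C" .
  have "l\<^sup>2 * C \<le> l\<^sup>2 * p" using Cp by (simp add: mult_left_mono)
  then have "0 \<le> W - 2 * l * X + l\<^sup>2 * p" using q2 by linarith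
  then have "0 \<le> p * (W - 2 * l * X + l\<^sup>2 * p)" using pp by simp
  also have "p * (W - 2 * l * X + l\<^sup>2 * p) = p * W - X\<^sup>2"
    unfolding l_def using pp by (simp add: field_simps power2_eq_square)
  finally have pW: "X\<^sup>2 \<le> p * W" by simp
  have "(2 * c * b n) * w\<^sup>2 \<le> 1 * w\<^sup>2" by (rule mult_right_mono[OF c]) simp
  then have cw: "2 * p * c * w\<^sup>2 \<le> w\<^sup>2" unfolding p_def by (simp add: ac_simps)
  have key: "2 * p * (m n * w + c * w\<^sup>2 + 1/2 * (p * (m n)\<^sup>2 - W)) \<le> 0"
  proof -
    have "2 * p * (m n * w + c * w\<^sup>2 + 1/2 * (p * (m n)\<^sup>2 - W))
        = - (w\<^sup>2) + 2 * p * c * w\<^sup>2 + (X\<^sup>2 - p * W)"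
      unfolding wX by (simp add: algebra_simps power2_eq_square)
    then show ?thesis using pW cw by linarith
  qed
  then have "m n * w + c * w\<^sup>2 + 1/2 * (p * (m n)\<^sup>2 - W) \<le> 0"
    using pp by (simp add: mult_le_0_iff)
  then show ?thesis using sW by simp
qed

lemma telesc: fixes v :: "nat \<Rightarrow> real" and n :: nat
  shows "(\<Sum>k=1..n. v k - v (k - 1)) = v n - v 0"
  by (induction n) (auto simp: sum.cl_ivl_Suc)

lemma sum_if_last:
  fixes k n :: nat and f :: "nat \<Rightarrow> real"
  assumes "1 \<le> k"
  shows "(\<Sum>m=k..n. (if m < n then f m else 0)) = (\<Sum>m=k..n-1. (f m :: real))"
proof (cases "k \<le> n")
  case True
  then have n: "n \<ge> 1" using assms by simp
  have e: "{k..n} = insert n {k..n-1}" using True n by auto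
  have "(\<Sum>m=k..n. (if m < n then f m else 0)) = (\<Sum>m=k..n-1. (if m < n then f m else 0))"
    unfolding e using n by (subst sum.insert) auto
  also have "\<dots> = (\<Sum>m=k..n-1. f m)" by (rule sum.cong) (use n in auto)
  finally show ?thesis .
next
  case False then show ?thesis by simp
qed

context kern begin

lemma Pk_D:
  assumes "n \<le> N"
  shows "(\<Sum>m=1..n. Pk \<alpha> t n m * Dtau \<alpha> t v m) = v n - v 0"
proof -
  let ?f = "\<lambda>m k. Pk \<alpha> t n m * (L1a \<alpha> t m k * (v k - v (k - 1)))"
  have "(\<Sum>m=1..n. Pk \<alpha> t n m * Dtau \<alpha> t v m) = (\<Sum>m\<in>{1..n}. \<Sum>k\<in>{k. k \<in> {1..n} \<and> k \<le> m}. ?f m k)"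
  proof (rule sum.cong[OF refl])
    fix m assume m: "m \<in> {1..n}"
    have "{k. k \<in> {1..n} \<and> k \<le> m} = {1..m}" using m by auto
    then show "Pk \<alpha> t n m * Dtau \<alpha> t v m = (\<Sum>k\<in>{k. k \<in> {1..n} \<and> k \<le> m}. ?f m k)"
      unfolding Dtau_def by (simp add: sum_distrib_left)
  qed
  also have "\<dots> = (\<Sum>k\<in>{1..n}. \<Sum>m\<in>{m. m \<in> {1..n} \<and> k \<le> m}. ?f m k)"
    by (rule sum.swap_restrict) auto
  also have "\<dots> = (\<Sum>k\<in>{1..n}. (v k - v (k - 1)) * (\<Sum>m=k..n. Pk \<alpha> t n m * L1a \<alpha> t m k))"
  proof (rule sum.cong[OF refl])
    fix k assume k: "k \<in> {1..n}"
    have "{m. m \<in> {1..n} \<and> k \<le> m} = {k..n}" using k by auto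
    then show "(\<Sum>m\<in>{m. m \<in> {1..n} \<and> k \<le> m}. ?f m k) = (v k - v (k - 1)) * (\<Sum>m=k..n. Pk \<alpha> t n m * L1a \<alpha> t m k)"
      by (simp add: sum_distrib_left algebra_simps)
  qed
  also have "\<dots> = (\<Sum>k\<in>{1..n}. v k - v (k - 1))"
    by (rule sum.cong[OF refl]) (use Pk_sum assms in auto)
  also have "\<dots> = v n - v 0" by (rule telesc)
  finally show ?thesis .
qed

lemma Bk_D:
  assumes "1 \<le> n" "n \<le> N"
  shows "(\<Sum>m=1..n. Bk \<alpha> t n m * Dtau \<alpha> t v m) = v n - v (n - 1)"
proof -
  have "(\<Sum>m=1..n. Bk \<alpha> t n m * Dtau \<alpha> t v m)
     = (\<Sum>m=1..n. Pk \<alpha> t n m * Dtau \<alpha> t v m) - (\<Sum>m=1..n. (if m < n then Pk \<alpha> t (n - 1) m * Dtau \<alpha> t v m else 0))"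
  proof -
    have "Bk \<alpha> t n m * Dtau \<alpha> t v m = Pk \<alpha> t n m * Dtau \<alpha> t v m
        - (if m < n then Pk \<alpha> t (n - 1) m * Dtau \<alpha> t v m else 0)" for m
      by (simp add: Bk_def left_diff_distrib)
    then show ?thesis by (simp add: sum_subtractf)
  qed
  also have "\<dots> = (v n - v 0) - (v (n - 1) - v 0)"
    unfolding sum_if_last[OF order_refl] using Pk_D[of n] Pk_D[of "n - 1"] assms by simp
  finally show ?thesis by simp
qed

lemma step_bound:
  fixes g \<epsilon> :: real
  assumes n: "1 \<le> n" "n \<le> N" and g: "g \<ge> 0" and eps: "\<epsilon> > 0"
    and step: "tmax t N \<le> (3 / (Gamma (2 - \<alpha>) * (4 * g\<^sup>2 + 3 * \<epsilon>))) powr (1 / \<alpha>)"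
  shows "(4 * g\<^sup>2 + 3 * \<epsilon>) / 3 \<le> L1a \<alpha> t n n"
proof -
  define \<tau> where "\<tau> = tstep t n"
  define \<Gamma> where "\<Gamma> = Gamma (2 - \<alpha>)"
  define K where "K = 3 / (\<Gamma> * (4 * g\<^sup>2 + 3 * \<epsilon>))"
  have tp: "\<tau> > 0" using tstep_pos n \<tau>_def by simp
  have Gp: "\<Gamma> > 0" using Gpos \<Gamma>_def by simp
  have Q: "4 * g\<^sup>2 + 3 * \<epsilon> > 0" using eps by (simp add: add_nonneg_pos)
  have Kp: "K > 0" unfolding K_def using Gp Q by simp
  have "\<tau> \<le> tmax t N" unfolding tmax_def \<tau>_def using n by (intro Max_ge) auto
  then have tK: "\<tau> \<le> K powr (1 / \<alpha>)" using step K_def \<Gamma>_def by simp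
  have "\<tau> powr \<alpha> \<le> (K powr (1 / \<alpha>)) powr \<alpha>"
    by (rule powr_mono2) (use tK tp a0 in auto)
  also have "\<dots> = K" using a0 Kp by (simp add: powr_powr)
  finally have tK2: "\<tau> powr \<alpha> \<le> K" .
  have tap: "\<tau> powr \<alpha> > 0" using tp by simp
  have "L1a \<alpha> t n n = 1 / (\<tau> powr \<alpha> * \<Gamma>)"
    using L1a_diag n unfolding \<tau>_def \<Gamma>_def by (simp add: powr_minus divide_inverse)
  also have "1 / (\<tau> powr \<alpha> * \<Gamma>) \<ge> 1 / (K * \<Gamma>)"
    using tK2 tap Gp Kp by (intro divide_left_mono mult_right_mono) auto
  also have "1 / (K * \<Gamma>) = (4 * g\<^sup>2 + 3 * \<epsilon>) / 3" unfolding K_def using Gp Q by simp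
  finally show ?thesis by simp
qed

end

theorem theorem3p1:
  fixes \<alpha> g \<epsilon> L :: real and M N :: nat and t :: "nat \<Rightarrow> real"
    and u0 :: "real \<Rightarrow> real \<Rightarrow> real" and u :: "nat \<Rightarrow> grid"
  assumes alpha: "0 < \<alpha>" "\<alpha> < 1"
    and g: "g \<ge> 0" and eps: "\<epsilon> > 0"
    and L: "L > 0" and M: "M > 0"
    and t0: "t 0 = 0" and tmono: "\<And>k. k \<in> {1..N} \<Longrightarrow> t (k - 1) < t k"
    and per: "\<And>n. n \<le> N \<Longrightarrow> grid_periodic M (u n)"
    and init: "\<And>i j. i \<in> {0..int M} \<Longrightarrow> j \<in> {0..int M} \<Longrightarrow>
                 u 0 i j = u0 (real_of_int i * (L / real M)) (real_of_int j * (L / real M))"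
    and scheme: "\<And>n i j. n \<in> {1..N} \<Longrightarrow> i \<in> {0..int M} \<Longrightarrow> j \<in> {0..int M} \<Longrightarrow>
                 Dtau \<alpha> t (\<lambda>k. u k i j) n = - mu_h g \<epsilon> (L / real M) (u n) i j"
    and step: "tmax t N \<le> (3 / (Gamma (2 - \<alpha>) * (4 * g\<^sup>2 + 3 * \<epsilon>))) powr (1 / \<alpha>)"
  shows "\<forall>n\<in>{1..N}. mod_energy \<alpha> t M (L / real M) g \<epsilon> u n
                    - mod_energy \<alpha> t M (L / real M) g \<epsilon> u (n - 1) \<le> 0"
proof
  fix n assume nN: "n \<in> {1..N}"
  then have n1: "1 \<le> n" and nN': "n \<le> N" by auto
  interpret kern \<alpha> t N using alpha tmono by unfold_locales auto
  define h where "h = L / real M"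
  define \<mu> where "\<mu> = (\<lambda>m. mu_h g \<epsilon> h (u m))"
  define c where "c = (4 * g\<^sup>2 + 3 * \<epsilon>) / 6"
  define w where "w = (\<lambda>i j. u n i j - u (n - 1) i j)"
  define B where "B = Bk \<alpha> t n"
  define nm where "nm = (\<lambda>m. (norm_h M h (\<mu> m))\<^sup>2)"
  have wpt: "w i j = - (\<Sum>m=1..n. B m * \<mu> m i j)" if ij: "i \<in> {1..int M}" "j \<in> {1..int M}" for i j
  proof -
    have "w i j = (\<Sum>m=1..n. B m * Dtau \<alpha> t (\<lambda>k. u k i j) m)"
      unfolding w_def B_def using Bk_D[OF n1 nN'] by simp
    also have "\<dots> = (\<Sum>m=1..n. B m * (- \<mu> m i j))"
      by (rule sum.cong[OF refl]) (use scheme ij nN' in \<open>auto simp: \<mu>_def h_def\<close>)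
    finally show ?thesis by (simp add: sum_negf)
  qed
  have ME1: "mod_energy \<alpha> t M h g \<epsilon> u n = energy M h g \<epsilon> (u n) + 1/2 * (\<Sum>m=1..n. Pk \<alpha> t n m * nm m)"
    unfolding mod_energy_def nm_def \<mu>_def using n1 by simp
  have ME0: "mod_energy \<alpha> t M h g \<epsilon> u (n - 1) = energy M h g \<epsilon> (u (n - 1)) + 1/2 * (\<Sum>m=1..n-1. Pk \<alpha> t (n - 1) m * nm m)"
  proof (cases "n = 1")
    case True
    then show ?thesis unfolding mod_energy_def by simp
  next
    case False
    then have "n - 1 \<noteq> 0" using n1 by simp
    then show ?thesis unfolding mod_energy_def nm_def \<mu>_def by (simp only: if_False)
  qed
  have Bsum: "(\<Sum>m=1..n. B m * nm m) = (\<Sum>m=1..n. Pk \<alpha> t n m * nm m) - (\<Sum>m=1..n-1. Pk \<alpha> t (n - 1) m * nm m)"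
  proof -
    have "(\<Sum>m=1..n. B m * nm m) = (\<Sum>m=1..n. Pk \<alpha> t n m * nm m) - (\<Sum>m=1..n. (if m < n then Pk \<alpha> t (n - 1) m * nm m else 0))"
    proof -
      have "B m * nm m = Pk \<alpha> t n m * nm m - (if m < n then Pk \<alpha> t (n - 1) m * nm m else 0)" for m
        by (simp add: B_def Bk_def left_diff_distrib)
      then show ?thesis by (simp add: sum_subtractf)
    qed
    then show ?thesis unfolding sum_if_last[OF order_refl] .
  qed
  have diff: "mod_energy \<alpha> t M h g \<epsilon> u n - mod_energy \<alpha> t M h g \<epsilon> u (n - 1)
      = energy M h g \<epsilon> (u n) - energy M h g \<epsilon> (u (n - 1)) + 1/2 * (\<Sum>m=1..n. B m * nm m)"
    unfolding ME1 ME0 Bsum by (simp add: algebra_simps)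
  have Ed: "energy M h g \<epsilon> (u n) - energy M h g \<epsilon> (u (n - 1)) \<le> h\<^sup>2 * SS M (\<lambda>i j. \<mu> n i j * w i j + c * (w i j)\<^sup>2)"
    unfolding \<mu>_def w_def c_def using energy_diff[OF per[OF nN'] per[of "n-1"] M] nN' by simp
  have nmS: "nm m = h\<^sup>2 * SS M (\<lambda>i j. (\<mu> m i j)\<^sup>2)" for m
    unfolding nm_def by (rule normsq_SS)
  have tot: "h\<^sup>2 * SS M (\<lambda>i j. \<mu> n i j * w i j + c * (w i j)\<^sup>2) + 1/2 * (\<Sum>m=1..n. B m * nm m)
       = h\<^sup>2 * SS M (\<lambda>i j. \<mu> n i j * w i j + c * (w i j)\<^sup>2 + 1/2 * (\<Sum>m=1..n. B m * (\<mu> m i j)\<^sup>2))"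
  proof -
    have "SS M (\<lambda>i j. 1/2 * (\<Sum>m=1..n. B m * (\<mu> m i j)\<^sup>2)) = 1/2 * (\<Sum>m=1..n. B m * SS M (\<lambda>i j. (\<mu> m i j)\<^sup>2))"
    proof -
      have "SS M (\<lambda>i j. 1/2 * (\<Sum>m=1..n. B m * (\<mu> m i j)\<^sup>2)) = 1/2 * SS M (\<lambda>i j. \<Sum>m=1..n. B m * (\<mu> m i j)\<^sup>2)"
        by (rule SS_cmult)
      also have "SS M (\<lambda>i j. \<Sum>m=1..n. B m * (\<mu> m i j)\<^sup>2) = (\<Sum>m=1..n. SS M (\<lambda>i j. B m * (\<mu> m i j)\<^sup>2))"
        by (rule SS_sum)
      also have "\<dots> = (\<Sum>m=1..n. B m * SS M (\<lambda>i j. (\<mu> m i j)\<^sup>2))"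
        by (rule sum.cong[OF refl]) (rule SS_cmult)
      finally show ?thesis .
    qed
    then show ?thesis unfolding nmS SS_add
      by (simp add: algebra_simps sum_distrib_left)
  qed
  have Bn: "B n > 0" unfolding B_def using Bk_diag L1a_pos[of n n] n1 nN' by simp
  have Bj: "B j \<le> 0" if "1 \<le> j" "j < n" for j unfolding B_def using Bk_nonpos that nN' by simp
  have Brs: "(\<Sum>j=1..n. B j) \<ge> 0" unfolding B_def using Bk_rowsum n1 nN' by simp
  have cB: "2 * c * B n \<le> 1"
  proof -
    have A: "(4 * g\<^sup>2 + 3 * \<epsilon>) / 3 \<le> L1a \<alpha> t n n" using step_bound[OF n1 nN' g eps step] .
    have Ap: "L1a \<alpha> t n n > 0" using L1a_pos[of n n] n1 nN' by simp
    have "2 * c * B n = ((4 * g\<^sup>2 + 3 * \<epsilon>) / 3) / L1a \<alpha> t n n"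
      unfolding B_def Bk_diag c_def using Ap by (simp add: field_simps)
    also have "\<dots> \<le> 1" using A Ap by simp
    finally show ?thesis .
  qed
  have pt: "\<mu> n i j * w i j + c * (w i j)\<^sup>2 + 1/2 * (\<Sum>m=1..n. B m * (\<mu> m i j)\<^sup>2) \<le> 0"
    if "i \<in> {1..int M}" "j \<in> {1..int M}" for i j
    by (rule scalar_key[OF n1 Bn Bj Brs cB wpt[OF that]])
  have "SS M (\<lambda>i j. \<mu> n i j * w i j + c * (w i j)\<^sup>2 + 1/2 * (\<Sum>m=1..n. B m * (\<mu> m i j)\<^sup>2)) \<le> 0"
    by (rule SS_nonpos) (rule pt)
  then have "h\<^sup>2 * SS M (\<lambda>i j. \<mu> n i j * w i j + c * (w i j)\<^sup>2 + 1/2 * (\<Sum>m=1..n. B m * (\<mu> m i j)\<^sup>2)) \<le> 0"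
    by (simp add: mult_nonneg_nonpos)
  then show "mod_energy \<alpha> t M (L / real M) g \<epsilon> u n - mod_energy \<alpha> t M (L / real M) g \<epsilon> u (n - 1) \<le> 0"
    using diff Ed tot unfolding h_def by linarith
qed

end
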